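(* Let $m\ge1$, $\gamma\in[0,1]$, $F\in C^{m,\gamma}(\mathbb{R}^n)$ and $K\subset\mathbb{R}^n$ compact with $D^jF(x)=0$ for all $x\in K$ and $1\le|j|\le m$; if $\gamma>0$ assume also $\lim_{\varepsilon\to0^+}|\nabla^mF|_{C^{0,\gamma}(K_\varepsilon)}=0$. For $\varepsilon>0$ let $\eta_\varepsilon$ be a compression map of level $\varepsilon$, and define the jet $\vec f_\varepsilon=\{f^{(j)}_\varepsilon\}_{|j|\le m}$ on $K$ by $f^{(0)}_\varepsilon=\eta_\varepsilon\circ F|_K$ and $f^{(j)}_\varepsilon=0$ for $1\le|j|\le m$. Then there is a function $\delta:\mathbb{R}_+\to\mathbb{R}_+$ with $\delta(\varepsilon)\to0$ as $\varepsilon\to0^+$ such that $\|\vec f_\varepsilon\|_{C^{m,\gamma}_{\mathrm{jet}}(K)}\le\delta(\varepsilon)$ for every $\varepsilon>0$ and every compression map $\eta_\varepsilon$ of level $\varepsilon$.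
   Context: Compression map of level $\varepsilon$: given finitely many pairwise disjoint open intervals $I_1,\dots,I_N\subset\mathbb{R}$ with $\sum|I_i|<\varepsilon$, set $\eta_\varepsilon(t)=\int_0^t\mathbf 1_{\bigcup_iI_i}(s)\,ds$ (so $\eta_\varepsilon$ is 1-Lipschitz, $\|\eta_\varepsilon\|_{C^0}\le\varepsilon$, and $\eta_\varepsilon(t)=t-c_i$ on $I_i$ for constants $c_i$). A jet of order $m$ on $K$ is a family $\vec f=\{f^{(j)}\}_{|j|\le m}$ of functions $K\to\mathbb{R}$ indexed by multi-indices. Set $R_j\vec f(x,y)=f^{(j)}(x)-\sum_{|j+l|\le m}\frac1{l!}f^{(j+l)}(y)(x-y)^l$. For $\gamma\in(0,1]$, $\|\vec f\|_{C^{m,\gamma}_{\mathrm{jet}}(K)}=\sup_{|j|\le m,\,x\ne y\in K}\max\{|f^{(j)}(x)|,\ |R_j\vec f(x,y)|/|x-y|^{m+\gamma-|j|}\}$. For $\gamma=0$, $C^{m,0}_{\mathrm{jet}}(K)$ consists of jets with bounded components and $|R_j\vec f(x,y)|/|x-y|^{m-|j|}\to0$ uniformly as $|x-y|\to0$, with the same formula for the norm (with $\gamma=0$). $K_\varepsilon$ is the open $\varepsilon$-neighbourhood of $K$ and $|f|_{C^{0,\gamma}(E)}=\sup_{x\neq y\in E}|f(x)-f(y)|/|x-y|^\gamma$. *)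

theory Defs
  imports "HOL-Analysis.Analysis"
begin

type_synonym 'n mindex = "'n \<Rightarrow> nat"

definition mabs :: "('n::finite) mindex \<Rightarrow> nat" where
  "mabs j = (\<Sum>i\<in>UNIV. j i)"

definition mfact :: "('n::finite) mindex \<Rightarrow> real" where
  "mfact l = (\<Prod>i\<in>UNIV. fact (l i))"

definition mpow :: "real^('n::finite) \<Rightarrow> 'n mindex \<Rightarrow> real" where
  "mpow v l = (\<Prod>i\<in>UNIV. (v $ i) ^ (l i))"

definition partial_deriv :: "'n::finite \<Rightarrow> (real^'n \<Rightarrow> real) \<Rightarrow> real^'n \<Rightarrow> real" where
  "partial_deriv i f x = deriv (\<lambda>t. f (x + t *\<^sub>R axis i 1)) 0"

fun iterD :: "('n::finite) list \<Rightarrow> (real^'n \<Rightarrow> real) \<Rightarrow> real^'n \<Rightarrow> real" where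
  "iterD [] f = f"
| "iterD (i # is) f = partial_deriv i (iterD is f)"

text \<open>D^j F: differentiate j(i) times in direction i (order irrelevant for C^m functions).\<close>

definition mderiv :: "('n::finite) mindex \<Rightarrow> (real^'n \<Rightarrow> real) \<Rightarrow> real^'n \<Rightarrow> real" where
  "mderiv j F = iterD (SOME ds. \<forall>i. count (mset ds) i = j i) F"

definition Cm :: "nat \<Rightarrow> (real^('n::finite) \<Rightarrow> real) \<Rightarrow> bool" where
  "Cm m F \<longleftrightarrow>
     (\<forall>ds. length ds \<le> m \<longrightarrow> continuous_on UNIV (iterD ds F)) \<and>
     (\<forall>ds i x. length ds < m \<longrightarrow>
        (\<lambda>t. iterD ds F (x + t *\<^sub>R axis i 1)) differentiable (at 0))"

definition Cmg :: "nat \<Rightarrow> real \<Rightarrow> (real^('n::finite) \<Rightarrow> real) \<Rightarrow> bool" where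
  "Cmg m \<gamma> F \<longleftrightarrow> Cm m F \<and>
     (\<forall>j. mabs j \<le> m \<longrightarrow> bounded (range (mderiv j F))) \<and>
     (\<gamma> > 0 \<longrightarrow> (\<exists>M. \<forall>j x y. mabs j = m \<longrightarrow>
         \<bar>mderiv j F x - mderiv j F y\<bar> \<le> M * dist x y powr \<gamma>))"

definition holder_grad_seminorm :: "nat \<Rightarrow> real \<Rightarrow> (real^('n::finite) \<Rightarrow> real) \<Rightarrow> (real^'n) set \<Rightarrow> ereal" where
  "holder_grad_seminorm m \<gamma> F E =
     Sup (insert 0 {ereal (\<bar>mderiv j F x - mderiv j F y\<bar> / dist x y powr \<gamma>) | j x y.
                      mabs j = m \<and> x \<in> E \<and> y \<in> E \<and> x \<noteq> y})"

definition nbhd :: "(real^('n::finite)) set \<Rightarrow> real \<Rightarrow> (real^'n) set" where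
  "nbhd K \<epsilon> = (\<Union>x\<in>K. ball x \<epsilon>)"

definition compression_map :: "real \<Rightarrow> (real \<Rightarrow> real) \<Rightarrow> bool" where
  "compression_map \<epsilon> \<eta> \<longleftrightarrow>
     (\<exists>I :: (real \<times> real) set. finite I \<and> (\<forall>p\<in>I. fst p < snd p) \<and>
        pairwise (\<lambda>p q. disjnt {fst p<..<snd p} {fst q<..<snd q}) I \<and>
        (\<Sum>p\<in>I. snd p - fst p) < \<epsilon> \<and>
        (\<forall>t. \<eta> t = (let U = (\<Union>p\<in>I. {fst p<..<snd p}) in
                      if 0 \<le> t then integral {0..t} (indicator U)
                      else - integral {t..0} (indicator U))))"

type_synonym 'n jet = "'n mindex \<Rightarrow> real^'n \<Rightarrow> real"

definition jet_rem :: "nat \<Rightarrow> ('n::finite) jet \<Rightarrow> 'n mindex \<Rightarrow> real^'n \<Rightarrow> real^'n \<Rightarrow> real" where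
  "jet_rem m f j x y = f j x -
     (\<Sum>l\<in>{l. mabs (\<lambda>i. j i + l i) \<le> m}. (1 / mfact l) * f (\<lambda>i. j i + l i) y * mpow (x - y) l)"

definition jet_norm :: "nat \<Rightarrow> real \<Rightarrow> (real^('n::finite)) set \<Rightarrow> 'n jet \<Rightarrow> ereal" where
  "jet_norm m \<gamma> K f =
     Sup ({ereal \<bar>f j x\<bar> | j x. mabs j \<le> m \<and> x \<in> K} \<union>
          {ereal (\<bar>jet_rem m f j x y\<bar> / dist x y powr (real m + \<gamma> - real (mabs j))) | j x y.
              mabs j \<le> m \<and> x \<in> K \<and> y \<in> K \<and> x \<noteq> y})"

end

theory Submission
  imports Defs
begin


lemma compression_props:
  assumes "compression_map \<epsilon> \<eta>"
  shows "\<eta> 0 = 0" "\<And>s t. \<bar>\<eta> s - \<eta> t\<bar> \<le> \<bar>s - t\<bar>" "\<And>s t. \<bar>\<eta> s - \<eta> t\<bar> \<le> \<epsilon>"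
proof -
  obtain I :: "(real \<times> real) set" where fin: "finite I" and ord: "\<forall>p\<in>I. fst p < snd p"
    and sm: "(\<Sum>p\<in>I. snd p - fst p) < \<epsilon>"
    and eta: "\<And>t. \<eta> t = (let U = (\<Union>p\<in>I. {fst p<..<snd p}) in
                      if 0 \<le> t then integral {0..t} (indicator U)
                      else - integral {t..0} (indicator U))"
    using assms unfolding compression_map_def by blast
  define U where "U = (\<Union>p\<in>I. {fst p<..<snd p})"
  have eta': "\<eta> t = (if 0 \<le> t then integral {0..t} (indicator U) else - integral {t..0} (indicator U))" for t
    using eta[of t] unfolding U_def Let_def by simp
  have Usets: "U \<in> sets lebesgue" unfolding U_def by (intro sets.finite_UN fin) auto
  have lm: "U \<inter> {a..b} \<in> lmeasurable" for a b :: real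
    using fmeasurable_Int_fmeasurable[of "{a..b}" lebesgue U] Usets by (simp add: Int_commute)
  have int: "integral {a..b} (indicator U) = measure lebesgue (U \<inter> {a..b})" for a b :: real
    using integral_indicator[OF lm] .
  have intg: "indicat_real U integrable_on {a..b}" for a b :: real
    using lm integrable_on_indicator by blast
  have diff: "\<eta> s - \<eta> t = integral {t..s} (indicator U)" if "t \<le> s" for s t
  proof (cases "0 \<le> t")
    case True
    then show ?thesis using Henstock_Kurzweil_Integration.integral_combine[OF True that intg[of 0 s]] that by (simp add: eta')
  next
    case False
    show ?thesis
    proof (cases "0 \<le> s")
      case True
      then show ?thesis using Henstock_Kurzweil_Integration.integral_combine[of t 0 s, OF _ True intg[of t s]] False by (simp add: eta')
    next
      case False2: False
      then show ?thesis using Henstock_Kurzweil_Integration.integral_combine[of t s 0, OF that _ intg[of t 0]] False by (simp add: eta')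
    qed
  qed
  have b1: "0 \<le> \<eta> s - \<eta> t \<and> \<eta> s - \<eta> t \<le> s - t \<and> \<eta> s - \<eta> t \<le> \<epsilon>" if "t \<le> s" for s t
  proof -
    have e: "\<eta> s - \<eta> t = measure lebesgue (U \<inter> {t..s})" using diff[OF that] int by simp
    have "measure lebesgue (U \<inter> {t..s}) \<le> measure lebesgue {t..s}"
      by (intro measure_mono_fmeasurable) (use lm in auto)
    moreover have "measure lebesgue (U \<inter> {t..s}) \<le> measure lebesgue (\<Union>p\<in>I. {fst p..snd p})"
    proof (intro measure_mono_fmeasurable)
      show "U \<inter> {t..s} \<subseteq> (\<Union>p\<in>I. {fst p..snd p})" unfolding U_def by auto
      show "U \<inter> {t..s} \<in> sets lebesgue" using lm by auto
      show "(\<Union>p\<in>I. {fst p..snd p}) \<in> fmeasurable lebesgue"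
        using fin by (intro fmeasurable.finite_UN) auto
    qed
    moreover have "measure lebesgue (\<Union>p\<in>I. {fst p..snd p}) \<le> (\<Sum>p\<in>I. measure lebesgue {fst p..snd p})"
      using fin by (intro measure_UNION_le) auto
    moreover have "(\<Sum>p\<in>I. measure lebesgue {fst p..snd p}) = (\<Sum>p\<in>I. snd p - fst p)"
      using ord by (intro sum.cong) auto
    ultimately show ?thesis using e that sm by (simp add: measure_nonneg)
  qed
  show "\<eta> 0 = 0" by (simp add: eta')
  show "\<bar>\<eta> s - \<eta> t\<bar> \<le> \<bar>s - t\<bar>" for s t
    using b1[of t s] b1[of s t] by (cases "t \<le> s") auto
  show "\<bar>\<eta> s - \<eta> t\<bar> \<le> \<epsilon>" for s t
    using b1[of t s] b1[of s t] by (cases "t \<le> s") auto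
qed


lemma Cm_cont: "Cm m F \<Longrightarrow> length ds \<le> m \<Longrightarrow> continuous_on UNIV (iterD ds F)"
  unfolding Cm_def by blast

lemma Cm_line:
  assumes "Cm m F" "length ds < m"
  shows "((\<lambda>t. iterD ds F (z + t *\<^sub>R axis i 1)) has_real_derivative
           iterD (i#ds) F (z + s *\<^sub>R axis i 1)) (at s)"
proof -
  define w where "w = z + s *\<^sub>R axis i 1"
  have "(\<lambda>t. iterD ds F (w + t *\<^sub>R axis i 1)) differentiable (at 0)"
    using assms unfolding Cm_def by blast
  then have "((\<lambda>t. iterD ds F (w + t *\<^sub>R axis i 1)) has_real_derivative
       deriv (\<lambda>t. iterD ds F (w + t *\<^sub>R axis i 1)) 0) (at 0)"
    using DERIV_deriv_iff_real_differentiable by blast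
  then have "((\<lambda>t. iterD ds F (w + t *\<^sub>R axis i 1)) has_real_derivative iterD (i#ds) F w) (at 0)"
    by (simp add: partial_deriv_def)
  moreover have "(\<lambda>t. iterD ds F (w + t *\<^sub>R axis i 1)) = (\<lambda>t. iterD ds F (z + (t + s) *\<^sub>R axis i 1))"
    by (simp add: w_def scaleR_add_left algebra_simps)
  ultimately have "((\<lambda>t. iterD ds F (z + (t + s) *\<^sub>R axis i 1)) has_real_derivative iterD (i#ds) F w) (at 0)"
    by simp
  then have "((\<lambda>t. iterD ds F (z + t *\<^sub>R axis i 1)) has_real_derivative iterD (i#ds) F w) (at (0 + s))"
    using DERIV_shift[of "\<lambda>t. iterD ds F (z + t *\<^sub>R axis i 1)" "iterD (i#ds) F w" 0 s] by simp
  then show ?thesis by (simp add: w_def)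
qed

definition proj :: "'n::finite set \<Rightarrow> real^'n \<Rightarrow> real^'n" where
  "proj S h = (\<chi> i. if i \<in> S then h$i else 0)"

lemma proj_insert: "k \<notin> S \<Longrightarrow> proj (insert k S) h = proj S h + (h$k) *\<^sub>R axis k 1"
  by (auto simp: proj_def vec_eq_iff axis_def)

lemma proj_UNIV: "proj UNIV h = h" by (simp add: proj_def vec_eq_iff)

lemma norm_proj_line:
  assumes "k \<notin> S" "\<bar>t\<bar> \<le> \<bar>h$k\<bar>"
  shows "norm (proj S h + t *\<^sub>R axis k 1) \<le> norm h"
  by (rule norm_le_componentwise_cart) (use assms in \<open>auto simp: proj_def axis_def\<close>)

lemma FD_claim:
  fixes f :: "real^'n::finite \<Rightarrow> real" and p :: "'n \<Rightarrow> real^'n \<Rightarrow> real"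
  assumes ld: "\<And>z i s. ((\<lambda>t. f (z + t *\<^sub>R axis i 1)) has_real_derivative p i (z + s *\<^sub>R axis i 1)) (at s)"
    and dd': "\<And>z i. norm (z - w) < d \<Longrightarrow> \<bar>p i z - p i w\<bar> \<le> e'"
    and e': "e' > 0" and y: "norm h < d"
  shows "\<bar>f (w + proj S h) - f w - (\<Sum>i\<in>S. h$i * p i w)\<bar> \<le> e' * real (card S) * norm h"
proof -
      have "finite S" by simp
  then show ?thesis
  proof (induction S rule: finite_induct)
    case empty
    have "proj {} h = 0" by (simp add: proj_def vec_eq_iff)
    then have "w + proj {} h = w" by simp
    then show ?case by (simp only: sum.empty card.empty)
  next
    case (insert k S)
    define z where "z = w + proj S h"
    define q where "q t = f (z + t *\<^sub>R axis k 1) - p k w * t" for t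
    have qd: "(q has_field_derivative (p k (z + t *\<^sub>R axis k 1) - p k w)) (at t within closed_segment 0 (h$k))" for t
    proof -
      have "((\<lambda>t. p k w * t) has_real_derivative p k w * 1) (at t)"
        by (rule DERIV_cmult[OF DERIV_ident])
      from DERIV_diff[OF ld this]
      have "(q has_real_derivative (p k (z + t *\<^sub>R axis k 1) - p k w)) (at t)"
        unfolding q_def[abs_def] by (simp only: mult_1_right)
      then show ?thesis by (rule has_field_derivative_at_within)
    qed
    have qb: "norm (p k (z + t *\<^sub>R axis k 1) - p k w) \<le> e'" if "t \<in> closed_segment 0 (h$k)" for t
    proof -
      have "t \<in> (if 0 \<le> h$k then {0..h$k} else {h$k..0})" using that by (simp only: closed_segment_eq_real_ivl)
      then have "\<bar>t\<bar> \<le> \<bar>h$k\<bar>" by (cases "0 \<le> h$k") auto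
      then have "norm (proj S h + t *\<^sub>R axis k 1) \<le> norm h"
        using insert.hyps by (intro norm_proj_line) auto
      then have "norm ((z + t *\<^sub>R axis k 1) - w) < d" using y by (simp add: z_def)
      then show ?thesis using dd' by simp
    qed
    have "norm (q (h$k) - q 0) \<le> e' * norm (h$k - 0)"
      by (rule field_differentiable_bound[OF convex_closed_segment qd qb ends_in_segment(2) ends_in_segment(1)])
    also have "\<dots> \<le> e' * norm h" using e' by (simp add: component_le_norm_cart)
    finally have A: "\<bar>q (h$k) - q 0\<bar> \<le> e' * norm h" by simp
    have "f (w + proj (insert k S) h) - f w - (\<Sum>i\<in>insert k S. h$i * p i w)
        = (q (h$k) - q 0) + (f (w + proj S h) - f w - (\<Sum>i\<in>S. h$i * p i w))"
      using insert.hyps by (simp add: proj_insert q_def z_def add.assoc mult.commute)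
    then have "\<bar>f (w + proj (insert k S) h) - f w - (\<Sum>i\<in>insert k S. h$i * p i w)\<bar>
         \<le> e' * norm h + e' * real (card S) * norm h"
      using A insert.IH by linarith
    then show ?case using insert.hyps by (simp add: algebra_simps)
  qed
qed

lemma FD:
  fixes f :: "real^'n::finite \<Rightarrow> real" and p :: "'n \<Rightarrow> real^'n \<Rightarrow> real"
  assumes ld: "\<And>z i s. ((\<lambda>t. f (z + t *\<^sub>R axis i 1)) has_real_derivative p i (z + s *\<^sub>R axis i 1)) (at s)"
    and cont: "\<And>i. continuous_on UNIV (p i)"
  shows "(f has_derivative (\<lambda>h. \<Sum>i\<in>UNIV. h$i * p i w)) (at w)"
  unfolding has_derivative_at_alt
proof (intro conjI allI impI)
  show "bounded_linear (\<lambda>h. \<Sum>i\<in>UNIV. h$i * p i w)"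
    by (rule linear_conv_bounded_linear[THEN iffD1]) (auto simp: linear_iff sum.distrib algebra_simps sum_distrib_left)
  fix e :: real assume e: "e > 0"
  define N where "N = real CARD('n)"
  have N: "N > 0" by (simp add: N_def)
  define e' where "e' = e / N"
  have e': "e' > 0" using e N by (simp add: e'_def)
  have "\<forall>\<^sub>F z in at w. \<forall>i. dist (p i z) (p i w) < e'"
  proof (rule eventually_all_finite)
    fix i
    have "isCont (p i) w" using cont[of i] by (simp add: continuous_on_eq_continuous_at)
    then have "(p i \<longlongrightarrow> p i w) (at w)" by (simp add: isCont_def)
    then show "\<forall>\<^sub>F z in at w. dist (p i z) (p i w) < e'" using e' tendstoD by blast
  qed
  then obtain d where d: "d > 0" and dd: "\<And>z i. z \<noteq> w \<Longrightarrow> dist z w < d \<Longrightarrow> dist (p i z) (p i w) < e'"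
    unfolding eventually_at by blast
  have dd': "\<bar>p i z - p i w\<bar> \<le> e'" if "norm (z - w) < d" for z i
    using dd[of z i] that e' by (cases "z = w") (auto simp: dist_norm)
  show "\<exists>d>0. \<forall>y. norm (y - w) < d \<longrightarrow>
       norm (f y - f w - (\<Sum>i\<in>UNIV. (y - w) $ i * p i w)) \<le> e * norm (y - w)"
  proof (intro exI[of _ d] conjI allI impI d)
    fix y assume y: "norm (y - w) < d"
    define h where "h = y - w"
    have claim: "\<bar>f (w + proj S h) - f w - (\<Sum>i\<in>S. h$i * p i w)\<bar> \<le> e' * real (card S) * norm h"
      for S :: "'n set"
      using FD_claim[OF ld dd' e', where h=h and S=S] y by (simp add: h_def)
    from claim[of UNIV] have "\<bar>f y - f w - (\<Sum>i\<in>UNIV. h$i * p i w)\<bar> \<le> e' * N * norm h"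
      by (simp add: proj_UNIV h_def N_def)
    then show "norm (f y - f w - (\<Sum>i\<in>UNIV. (y - w) $ i * p i w)) \<le> e * norm (y - w)"
      using N by (simp add: e'_def h_def)
  qed
qed




lemma schwarz_key:
  fixes f :: "real^'n::finite \<Rightarrow> real" and D1 :: "'n \<Rightarrow> real^'n \<Rightarrow> real"
    and D2 :: "'n \<Rightarrow> 'n \<Rightarrow> real^'n \<Rightarrow> real"
  assumes ld1: "\<And>z i s. ((\<lambda>t. f (z + t *\<^sub>R axis i 1)) has_real_derivative D1 i (z + s *\<^sub>R axis i 1)) (at s)"
    and ld2: "\<And>z i j s. ((\<lambda>t. D1 i (z + t *\<^sub>R axis j 1)) has_real_derivative D2 j i (z + s *\<^sub>R axis j 1)) (at s)"
    and h: "h > 0"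
  shows "\<exists>\<xi>. norm (\<xi> - x) \<le> 2 * h \<and>
     f (x + h *\<^sub>R axis j 1 + h *\<^sub>R axis i 1) - f (x + h *\<^sub>R axis i 1) - f (x + h *\<^sub>R axis j 1) + f x
       = h * (h * D2 j i \<xi>)"
proof -
  define u where "u s = f ((x + h *\<^sub>R axis j 1) + s *\<^sub>R axis i 1) - f (x + s *\<^sub>R axis i 1)" for s
  have ud: "(u has_real_derivative (D1 i ((x + h *\<^sub>R axis j 1) + s *\<^sub>R axis i 1) - D1 i (x + s *\<^sub>R axis i 1))) (at s)" for s
    unfolding u_def[abs_def] by (rule DERIV_diff[OF ld1 ld1])
  obtain \<sigma> where \<sigma>: "0 < \<sigma>" "\<sigma> < h"
    and e1: "u h - u 0 = (h - 0) * (D1 i ((x + h *\<^sub>R axis j 1) + \<sigma> *\<^sub>R axis i 1) - D1 i (x + \<sigma> *\<^sub>R axis i 1))"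
    using MVT2[OF h ud] by blast
  define w where "w t = D1 i ((x + \<sigma> *\<^sub>R axis i 1) + t *\<^sub>R axis j 1)" for t
  have wd: "(w has_real_derivative D2 j i ((x + \<sigma> *\<^sub>R axis i 1) + t *\<^sub>R axis j 1)) (at t)" for t
    unfolding w_def[abs_def] by (rule ld2)
  obtain \<tau> where \<tau>: "0 < \<tau>" "\<tau> < h"
    and e2: "w h - w 0 = (h - 0) * D2 j i ((x + \<sigma> *\<^sub>R axis i 1) + \<tau> *\<^sub>R axis j 1)"
    using MVT2[OF h wd] by blast
  have "w h = D1 i ((x + h *\<^sub>R axis j 1) + \<sigma> *\<^sub>R axis i 1)"
    unfolding w_def by (simp add: algebra_simps)
  moreover have "w 0 = D1 i (x + \<sigma> *\<^sub>R axis i 1)" by (simp add: w_def)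
  ultimately have e3: "u h - u 0 = h * (h * D2 j i ((x + \<sigma> *\<^sub>R axis i 1) + \<tau> *\<^sub>R axis j 1))"
    using e1 e2 by simp
  have "norm (((x + \<sigma> *\<^sub>R axis i 1) + \<tau> *\<^sub>R axis j 1) - x) \<le> norm (\<sigma> *\<^sub>R axis i (1::real)) + norm (\<tau> *\<^sub>R axis j (1::real))"
  proof -
    have "((x + \<sigma> *\<^sub>R axis i 1) + \<tau> *\<^sub>R axis j 1) - x = \<sigma> *\<^sub>R axis i (1::real) + \<tau> *\<^sub>R axis j 1" by simp
    then show ?thesis by (metis norm_triangle_ineq)
  qed
  also have "\<dots> \<le> 2 * h" using \<sigma> \<tau> by simp
  finally have n: "norm (((x + \<sigma> *\<^sub>R axis i 1) + \<tau> *\<^sub>R axis j 1) - x) \<le> 2 * h" .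
  have "u h - u 0 = f (x + h *\<^sub>R axis j 1 + h *\<^sub>R axis i 1) - f (x + h *\<^sub>R axis i 1) - f (x + h *\<^sub>R axis j 1) + f x"
    by (simp add: u_def)
  then show ?thesis using e3 n by metis
qed

lemma schwarz:
  fixes f :: "real^'n::finite \<Rightarrow> real" and D1 :: "'n \<Rightarrow> real^'n \<Rightarrow> real"
    and D2 :: "'n \<Rightarrow> 'n \<Rightarrow> real^'n \<Rightarrow> real"
  assumes ld1: "\<And>z i s. ((\<lambda>t. f (z + t *\<^sub>R axis i 1)) has_real_derivative D1 i (z + s *\<^sub>R axis i 1)) (at s)"
    and ld2: "\<And>z i j s. ((\<lambda>t. D1 i (z + t *\<^sub>R axis j 1)) has_real_derivative D2 j i (z + s *\<^sub>R axis j 1)) (at s)"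
    and cont: "\<And>i j. continuous_on UNIV (D2 j i)"
  shows "D2 j i x = D2 i j x"
proof (rule ccontr)
  assume ne: "D2 j i x \<noteq> D2 i j x"
  define e where "e = \<bar>D2 j i x - D2 i j x\<bar> / 2"
  have e: "e > 0" using ne by (simp add: e_def)
  obtain r1 where r1: "r1 > 0" "\<And>y. dist y x < r1 \<Longrightarrow> dist (D2 j i y) (D2 j i x) < e"
    using cont[of j i] e unfolding continuous_on_iff by (metis UNIV_I)
  obtain r2 where r2: "r2 > 0" "\<And>y. dist y x < r2 \<Longrightarrow> dist (D2 i j y) (D2 i j x) < e"
    using cont[of i j] e unfolding continuous_on_iff by (metis UNIV_I)
  define h where "h = min r1 r2 / 4"
  have h: "h > 0" using r1 r2 by (simp add: h_def)
  obtain \<xi>1 where x1: "norm (\<xi>1 - x) \<le> 2 * h"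
    "f (x + h *\<^sub>R axis j 1 + h *\<^sub>R axis i 1) - f (x + h *\<^sub>R axis i 1) - f (x + h *\<^sub>R axis j 1) + f x
       = h * (h * D2 j i \<xi>1)"
    using schwarz_key[OF ld1 ld2 h, of x j i] by blast
  obtain \<xi>2 where x2: "norm (\<xi>2 - x) \<le> 2 * h"
    "f (x + h *\<^sub>R axis i 1 + h *\<^sub>R axis j 1) - f (x + h *\<^sub>R axis j 1) - f (x + h *\<^sub>R axis i 1) + f x
       = h * (h * D2 i j \<xi>2)"
    using schwarz_key[OF ld1 ld2 h, of x i j] by blast
  have "x + h *\<^sub>R axis i 1 + h *\<^sub>R axis j 1 = x + h *\<^sub>R axis j 1 + h *\<^sub>R axis i 1"
    by (simp add: algebra_simps)
  then have "h * (h * D2 j i \<xi>1) = h * (h * D2 i j \<xi>2)" using x1(2) x2(2) by (simp only:)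
  then have eq: "D2 j i \<xi>1 = D2 i j \<xi>2" using h by simp
  have "dist \<xi>1 x < r1" using x1(1) h r1 r2 by (simp add: dist_norm h_def)
  then have a: "\<bar>D2 j i \<xi>1 - D2 j i x\<bar> < e" using r1(2) by (simp add: dist_real_def)
  have "dist \<xi>2 x < r2" using x2(1) h r1 r2 by (simp add: dist_norm h_def)
  then have b: "\<bar>D2 i j \<xi>2 - D2 i j x\<bar> < e" using r2(2) by (simp add: dist_real_def)
  have "\<bar>D2 j i x - D2 i j x\<bar> \<le> \<bar>D2 j i \<xi>1 - D2 j i x\<bar> + \<bar>D2 i j \<xi>2 - D2 i j x\<bar>" using eq by linarith
  then show False using a b unfolding e_def by (smt (verit) field_sum_of_halves)
qed



lemma iterD_swap:
  assumes "Cm m F" "length b + 2 \<le> m"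
  shows "iterD (i#j#b) F = iterD (j#i#b) F"
proof
  fix x
  have "iterD (j#i#b) F x = iterD (i#j#b) F x"
  proof (rule schwarz[of "iterD b F" "\<lambda>i. iterD (i#b) F" "\<lambda>j i. iterD (j#i#b) F"])
    show "((\<lambda>t. iterD b F (z + t *\<^sub>R axis i 1)) has_real_derivative iterD (i#b) F (z + s *\<^sub>R axis i 1)) (at s)" for z i s
      using assms by (intro Cm_line) auto
    show "((\<lambda>t. iterD (i#b) F (z + t *\<^sub>R axis j 1)) has_real_derivative iterD (j#i#b) F (z + s *\<^sub>R axis j 1)) (at s)" for z i j s
      using assms by (intro Cm_line) auto
    show "continuous_on UNIV (iterD (j#i#b) F)" for i j
      using assms by (intro Cm_cont) auto
  qed
  then show "iterD (i#j#b) F x = iterD (j#i#b) F x" by simp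
qed

lemma iterD_swap_mid:
  assumes "Cm m F" "length (a @ i#j#b) \<le> m"
  shows "iterD (a @ i#j#b) F = iterD (a @ j#i#b) F"
  using assms(2)
proof (induction a)
  case Nil
  then show ?case using iterD_swap[OF assms(1)] by simp
next
  case (Cons c a)
  then show ?case by simp
qed

lemma iterD_front:
  assumes "Cm m F" "length (as @ i # bs) \<le> m"
  shows "iterD (as @ i # bs) F = iterD (i # as @ bs) F"
  using assms(2)
proof (induction as)
  case Nil
  then show ?case by simp
next
  case (Cons a as)
  then have "iterD ((a # as) @ i # bs) F = iterD (a # i # as @ bs) F" by simp
  also have "\<dots> = iterD ([] @ a # i # as @ bs) F" by simp
  also have "\<dots> = iterD ([] @ i # a # as @ bs) F"
    using Cons.prems by (intro iterD_swap_mid[OF assms(1)]) simp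
  finally show ?case by simp
qed

lemma iterD_perm:
  assumes "Cm m F"
  shows "mset ds = mset ds' \<Longrightarrow> length ds \<le> m \<Longrightarrow> iterD ds F = iterD ds' F"
proof (induction ds arbitrary: ds')
  case Nil
  then show ?case by simp
next
  case (Cons i r)
  have "i \<in> set ds'" using Cons.prems(1) by (metis list.set_intros(1) set_mset_mset)
  then obtain as bs where ds': "ds' = as @ i # bs" by (meson split_list)
  have m: "mset r = mset (as @ bs)" using Cons.prems(1) ds' by simp
  have l: "length ds' = length (i # r)" using Cons.prems(1) by (metis size_mset)
  have "iterD ds' F = iterD (i # as @ bs) F"
    using Cons.prems(2) l unfolding ds' by (intro iterD_front[OF assms]) simp
  also have "\<dots> = iterD (i # r) F" using Cons.IH[OF m] Cons.prems(2) by simp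
  finally show ?case by simp
qed

lemma mabs_count: "mabs (\<lambda>i. count (mset ds) i) = length ds"
proof (induction ds)
  case Nil
  then show ?case by (simp add: mabs_def)
next
  case (Cons a ds)
  have "(\<Sum>i\<in>UNIV. count (mset (a # ds)) i) = (\<Sum>i\<in>UNIV. count (mset ds) i + (if i = a then 1 else 0))"
    by (intro sum.cong) auto
  also have "\<dots> = (\<Sum>i\<in>UNIV. count (mset ds) i) + 1" by (simp add: sum.distrib)
  finally show ?case using Cons by (simp add: mabs_def)
qed

lemma mderiv_iterD:
  assumes "Cm m F" "length ds \<le> m"
  shows "mderiv (\<lambda>i. count (mset ds) i) F = iterD ds F"
proof -
  define ds' where "ds' = (SOME ds'. \<forall>i. count (mset ds') i = count (mset ds) i)"
  have "\<forall>i. count (mset ds') i = count (mset ds) i"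
    unfolding ds'_def by (rule someI[of _ ds]) simp
  then have "mset ds' = mset ds" by (simp add: multiset_eqI)
  then have "iterD ds F = iterD ds' F" using iterD_perm[OF assms(1)] assms(2) by metis
  then show ?thesis by (simp add: mderiv_def ds'_def)
qed



definition Ls :: "nat \<Rightarrow> ('n::finite) list set" where "Ls k = {ds. length ds = k}"

lemma finite_Ls: "finite (Ls k)"
  using finite_lists_length_eq[of "UNIV::'n::finite set" k] by (simp add: Ls_def)

lemma card_Ls: "card (Ls k :: ('n::finite) list set) = CARD('n) ^ k"
  using card_lists_length_eq[of "UNIV::'n::finite set" k] by (simp add: Ls_def)

lemma Ls_0: "Ls 0 = {[]}" by (auto simp: Ls_def)

lemma sum_Ls_Suc: "(\<Sum>ds\<in>Ls (Suc k). g ds) = (\<Sum>ds\<in>(Ls k :: ('n::finite) list set). \<Sum>i\<in>UNIV. g (i#ds))"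
proof -
  have e: "Ls (Suc k) = (\<lambda>(ds,i). i#ds) ` (Ls k \<times> (UNIV :: 'n set))"
    by (auto simp: Ls_def image_iff length_Suc_conv)
  have inj: "inj_on (\<lambda>(ds,i). i#ds) (Ls k \<times> (UNIV :: 'n set))"
    by (auto simp: inj_on_def)
  have "sum (g \<circ> (\<lambda>(ds,i). i#ds)) (Ls k \<times> UNIV) = (\<Sum>(ds,i)\<in>Ls k \<times> (UNIV::'n set). g (i#ds))"
    by (intro sum.cong) auto
  then show ?thesis unfolding e sum.reindex[OF inj] sum.cartesian_product by simp
qed

definition cprod :: "real^('n::finite) \<Rightarrow> 'n list \<Rightarrow> real" where
  "cprod v ds = prod_list (map (\<lambda>i. v$i) ds)"

lemma cprod_bound: "\<bar>cprod v ds\<bar> \<le> norm v ^ length ds"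
proof (induction ds)
  case Nil then show ?case by (simp add: cprod_def)
next
  case (Cons a ds)
  have "\<bar>cprod v (a#ds)\<bar> = \<bar>v$a\<bar> * \<bar>cprod v ds\<bar>" by (simp add: cprod_def abs_mult)
  also have "\<dots> \<le> norm v * norm v ^ length ds"
    by (intro mult_mono Cons.IH component_le_norm_cart) auto
  finally show ?case by simp
qed

definition GG :: "(real^('n::finite) \<Rightarrow> real) \<Rightarrow> real^'n \<Rightarrow> real^'n \<Rightarrow> nat \<Rightarrow> real \<Rightarrow> real" where
  "GG F y v k t = (\<Sum>ds\<in>Ls k. cprod v ds * iterD ds F (y + t *\<^sub>R v))"

lemma line_deriv:
  assumes "Cm m F" "length ds < m"
  shows "((\<lambda>t. iterD ds F (y + t *\<^sub>R v)) has_real_derivative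
           (\<Sum>i\<in>UNIV. v$i * iterD (i#ds) F (y + t *\<^sub>R v))) (at t)"
proof -
  have fd: "(iterD ds F has_derivative (\<lambda>h. \<Sum>i\<in>UNIV. h$i * iterD (i#ds) F (y + t *\<^sub>R v))) (at (y + t *\<^sub>R v))"
  proof (rule FD)
    show "((\<lambda>t. iterD ds F (z + t *\<^sub>R axis i 1)) has_real_derivative iterD (i#ds) F (z + s *\<^sub>R axis i 1)) (at s)" for z i s
      using assms by (intro Cm_line)
    show "continuous_on UNIV (iterD (i#ds) F)" for i
      using assms by (intro Cm_cont) auto
  qed
  have ld: "((\<lambda>t. y + t *\<^sub>R v) has_derivative (\<lambda>s. s *\<^sub>R v)) (at t)"
    by (auto intro!: derivative_eq_intros)
  have "((\<lambda>t. iterD ds F (y + t *\<^sub>R v)) has_derivative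
          (\<lambda>s. \<Sum>i\<in>UNIV. (s *\<^sub>R v)$i * iterD (i#ds) F (y + t *\<^sub>R v))) (at t)"
    using has_derivative_compose[OF ld fd] by simp
  moreover have "(\<lambda>s. \<Sum>i\<in>UNIV. (s *\<^sub>R v)$i * iterD (i#ds) F (y + t *\<^sub>R v))
       = (*) (\<Sum>i\<in>UNIV. v$i * iterD (i#ds) F (y + t *\<^sub>R v))"
    by (rule ext) (simp add: sum_distrib_left sum_distrib_right mult.assoc mult.commute)
  ultimately show ?thesis by (simp add: has_field_derivative_def)
qed

lemma GG_deriv:
  assumes "Cm m F" "k < m"
  shows "(GG F y v k has_real_derivative GG F y v (Suc k) t) (at t)"
proof -
  have "((\<lambda>t. \<Sum>ds\<in>Ls k. cprod v ds * iterD ds F (y + t *\<^sub>R v)) has_real_derivative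
      (\<Sum>ds\<in>Ls k. cprod v ds * (\<Sum>i\<in>UNIV. v$i * iterD (i#ds) F (y + t *\<^sub>R v)))) (at t)"
    by (intro DERIV_sum DERIV_cmult line_deriv[OF assms(1)]) (use assms in \<open>auto simp: Ls_def\<close>)
  moreover have "(\<Sum>ds\<in>Ls k. cprod v ds * (\<Sum>i\<in>UNIV. v$i * iterD (i#ds) F (y + t *\<^sub>R v)))
      = GG F y v (Suc k) t"
    unfolding GG_def sum_Ls_Suc by (simp add: sum_distrib_left cprod_def mult.assoc mult.left_commute)
  ultimately show ?thesis unfolding GG_def[abs_def] by simp
qed

lemma taylor_bound:
  fixes F :: "real^'n::finite \<Rightarrow> real"
  assumes Cm: "Cm m F" and m: "m \<ge> 1"
    and van: "\<And>ds. 1 \<le> length ds \<Longrightarrow> length ds \<le> m \<Longrightarrow> iterD ds F y = 0"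
    and B: "\<And>z ds. norm (z - y) \<le> norm (x - y) \<Longrightarrow> length ds = m \<Longrightarrow> \<bar>iterD ds F z - iterD ds F y\<bar> \<le> B"
  shows "\<bar>F x - F y\<bar> \<le> real CARD('n) ^ m * norm (x - y) ^ m * B"
proof -
  define v where "v = x - y"
  have B0: "0 \<le> B" if "length ds = m" for ds :: "'n list"
    using B[of y ds] that by simp
  have ex: "\<exists>ds :: 'n list. length ds = m" by (rule exI[of _ "replicate m undefined"]) simp
  then have B0': "0 \<le> B" using B0 by blast
  have G0: "GG F y v 0 = (\<lambda>t. F (y + t *\<^sub>R v))"
    by (auto simp: GG_def Ls_0 cprod_def)
  obtain t where t: "0 < t" "t < 1" and
    tay: "GG F y v 0 1 = (\<Sum>k<m. (GG F y v k 0 / fact k) * (1 - 0)^k) + (GG F y v m t / fact m) * (1 - 0)^m"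
    using Taylor_up[of m "GG F y v" "GG F y v 0" 0 1 0] GG_deriv[OF Cm] m by force
  have Gk0: "GG F y v k 0 = 0" if "1 \<le> k" "k \<le> m" for k
    unfolding GG_def using van that by (intro sum.neutral) (auto simp: Ls_def)
  have "(\<Sum>k<m. (GG F y v k 0 / fact k) * (1 - 0)^k) = (\<Sum>k<m. if k = 0 then F y else 0)"
    by (intro sum.cong) (auto simp: Gk0 G0)
  also have "\<dots> = F y" using m by simp
  finally have "F x - F y = GG F y v m t / fact m" using tay G0 by (simp add: v_def)
  moreover have "GG F y v m t = GG F y v m t - GG F y v m 0" using Gk0[of m] m by simp
  ultimately have eq: "F x - F y = (GG F y v m t - GG F y v m 0) / fact m" by simp
  have "\<bar>GG F y v m t - GG F y v m 0\<bar>
      = \<bar>\<Sum>ds\<in>Ls m. cprod v ds * (iterD ds F (y + t *\<^sub>R v) - iterD ds F y)\<bar>"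
    by (simp add: GG_def sum_subtractf algebra_simps)
  also have "\<dots> \<le> (\<Sum>ds\<in>Ls m. \<bar>cprod v ds * (iterD ds F (y + t *\<^sub>R v) - iterD ds F y)\<bar>)"
    by (rule sum_abs)
  also have "\<dots> \<le> (\<Sum>ds\<in>(Ls m :: 'n list set). norm v ^ m * B)"
  proof (intro sum_mono)
    fix ds :: "'n list" assume "ds \<in> Ls m"
    then have l: "length ds = m" by (simp add: Ls_def)
    have "norm (y + t *\<^sub>R v - y) \<le> norm (x - y)" using t by (simp add: v_def mult_left_le_one_le)
    then have "\<bar>iterD ds F (y + t *\<^sub>R v) - iterD ds F y\<bar> \<le> B" using B l by blast
    then show "\<bar>cprod v ds * (iterD ds F (y + t *\<^sub>R v) - iterD ds F y)\<bar> \<le> norm v ^ m * B"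
      unfolding abs_mult using cprod_bound[of v ds] l by (intro mult_mono) auto
  qed
  also have "\<dots> = real CARD('n) ^ m * norm v ^ m * B" by (simp add: card_Ls)
  finally have "\<bar>GG F y v m t - GG F y v m 0\<bar> \<le> real CARD('n) ^ m * norm v ^ m * B" .
  moreover have "\<bar>F x - F y\<bar> \<le> \<bar>GG F y v m t - GG F y v m 0\<bar>"
    proof -
    have f: "(1::real) \<le> fact m" by (rule fact_ge_1)
    have "\<bar>GG F y v m t - GG F y v m 0\<bar> * 1 \<le> \<bar>GG F y v m t - GG F y v m 0\<bar> * fact m"
      by (rule mult_left_mono[OF f]) simp
    then show ?thesis unfolding eq abs_divide using f by (simp add: divide_le_eq)
  qed
  ultimately show ?thesis by (simp add: v_def)
qed



lemma finite_delta:
  assumes "finite A" "\<And>a. a \<in> A \<Longrightarrow> \<exists>d>0. P a d"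
    and mono: "\<And>a d d'. P a d \<Longrightarrow> 0 < d' \<Longrightarrow> d' \<le> d \<Longrightarrow> P a d'"
  shows "\<exists>d>(0::real). \<forall>a\<in>A. P a d"
  using assms(1,2)
proof (induction A rule: finite_induct)
  case empty
  then show ?case by (auto intro: exI[of _ 1])
next
  case (insert a A)
  obtain d1 where d1: "d1 > 0" "P a d1" using insert.prems by blast
  obtain d2 where d2: "d2 > 0" "\<forall>b\<in>A. P b d2" using insert by blast
  show ?case
    by (rule exI[of _ "min d1 d2"]) (use d1 d2 in \<open>auto intro: mono\<close>)
qed

lemma LO:
  fixes F :: "real^'n::finite \<Rightarrow> real" and K :: "(real^'n) set"
    and m :: nat and \<gamma> :: real
  assumes m: "m \<ge> 1" and g0: "0 \<le> \<gamma>" and g1: "\<gamma> \<le> 1"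
    and Cmg: "Cmg m \<gamma> F"
    and K: "compact K"
    and van0: "\<And>j x. x \<in> K \<Longrightarrow> 1 \<le> mabs j \<Longrightarrow> mabs j \<le> m \<Longrightarrow> mderiv j F x = 0"
    and hol: "\<gamma> > 0 \<Longrightarrow> ((\<lambda>\<epsilon>. holder_grad_seminorm m \<gamma> F (nbhd K \<epsilon>)) \<longlongrightarrow> 0) (at_right 0)"
    and e: "e > 0"
  shows "\<exists>\<rho>>0. \<forall>x\<in>K. \<forall>y\<in>K. dist x y < \<rho> \<longrightarrow> \<bar>F x - F y\<bar> \<le> e * dist x y powr (real m + \<gamma>)"
proof -
  have Cm: "Cm m F" using Cmg by (simp add: Cmg_def)
  have van: "iterD ds F y = 0" if "y \<in> K" "1 \<le> length ds" "length ds \<le> m" for y ds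
    using van0[of y "\<lambda>i. count (mset ds) i"] mderiv_iterD[OF Cm that(3)] mabs_count[of ds] that by simp
  define N where "N = real CARD('n) ^ m"
  have N: "N > 0" by (simp add: N_def)
  define e' where "e' = e / N"
  have e': "e' > 0" using e N by (simp add: e'_def)
  have key: "\<bar>F x - F y\<bar> \<le> e * dist x y powr (real m + \<gamma>)"
    if xy: "x \<in> K" "y \<in> K" "x \<noteq> y"
      and Bh: "\<And>z ds. norm (z - y) \<le> norm (x - y) \<Longrightarrow> length ds = m \<Longrightarrow>
            \<bar>iterD ds F z - iterD ds F y\<bar> \<le> e' * dist x y powr \<gamma>" for x y
  proof -
    have d: "dist x y > 0" using xy by simp
    have "\<bar>F x - F y\<bar> \<le> N * norm (x - y) ^ m * (e' * dist x y powr \<gamma>)"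
      unfolding N_def by (rule taylor_bound[OF Cm m]) (use van xy Bh in auto)
    also have "\<dots> = e * (dist x y ^ m * dist x y powr \<gamma>)"
      using N by (simp add: e'_def dist_norm)
    also have "dist x y ^ m * dist x y powr \<gamma> = dist x y powr (real m + \<gamma>)"
      using d by (simp add: powr_add powr_realpow)
    finally show ?thesis .
  qed
  show ?thesis
  proof (cases "\<gamma> = 0")
    case True
    define K1 where "K1 = {a + b | a b. a \<in> K \<and> b \<in> cball (0::real^'n) 1}"
    have K1: "compact K1" unfolding K1_def by (intro compact_sums K compact_cball)
    have "\<exists>d>0. \<forall>z\<in>K1. \<forall>y\<in>K1. dist z y < d \<longrightarrow> dist (iterD ds F z) (iterD ds F y) < e'"
      if "ds \<in> Ls m" for ds
    proof -
      have "continuous_on K1 (iterD ds F)"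
        using Cm_cont[OF Cm, of ds] that by (auto simp: Ls_def intro: continuous_on_subset)
      then have "uniformly_continuous_on K1 (iterD ds F)"
        using K1 by (intro compact_uniformly_continuous)
      then show ?thesis using e' unfolding uniformly_continuous_on_def by blast
    qed
    then obtain d where d: "d > 0" and
      dd: "\<And>ds. ds \<in> Ls m \<Longrightarrow> \<forall>z\<in>K1. \<forall>y\<in>K1. dist z y < d \<longrightarrow> dist (iterD ds F z) (iterD ds F y) < e'"
      using finite_delta[OF finite_Ls, of m "\<lambda>ds d. \<forall>z\<in>K1. \<forall>y\<in>K1. dist z y < d \<longrightarrow> dist (iterD ds F z) (iterD ds F y) < e'"]
      by (smt (verit, ccfv_SIG))
    show ?thesis
    proof (intro exI[of _ "min d 1"] conjI ballI impI)
      show "0 < min d 1" using d by simp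
      fix x y assume x: "x \<in> K" and y: "y \<in> K" and dxy: "dist x y < min d 1"
      show "\<bar>F x - F y\<bar> \<le> e * dist x y powr (real m + \<gamma>)"
      proof (cases "x = y")
        case True then show ?thesis by simp
      next
        case False
        show ?thesis
        proof (rule key[OF x y False])
          fix z and ds :: "'n list"
          assume z: "norm (z - y) \<le> norm (x - y)" and l: "length ds = m"
          have zy: "norm (z - y) < min d 1" using z dxy by (simp add: dist_norm)
          have "z \<in> K1" unfolding K1_def
            by (rule CollectI, rule exI[of _ y], rule exI[of _ "z - y"]) (use y zy in \<open>auto simp: dist_norm norm_minus_commute\<close>)
          moreover have "y \<in> K1" unfolding K1_def
            by (rule CollectI, rule exI[of _ y], rule exI[of _ 0]) (use y in auto)
          ultimately have "dist (iterD ds F z) (iterD ds F y) < e'"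
            using dd[of ds] l zy by (auto simp: Ls_def dist_norm)
          then show "\<bar>iterD ds F z - iterD ds F y\<bar> \<le> e' * dist x y powr \<gamma>"
            using True False by (simp add: dist_real_def)
        qed
      qed
    qed
  next
    case False
    then have gp: "\<gamma> > 0" using g0 by simp
    have "\<forall>\<^sub>F \<epsilon> in at_right 0. holder_grad_seminorm m \<gamma> F (nbhd K \<epsilon>) < ereal e'"
      using order_tendstoD(2)[OF hol[OF gp], of "ereal e'"] e' by simp
    then obtain b where b: "b > 0" and bb: "\<And>\<epsilon>. 0 < \<epsilon> \<Longrightarrow> \<epsilon> < b \<Longrightarrow> holder_grad_seminorm m \<gamma> F (nbhd K \<epsilon>) < ereal e'"
      unfolding eventually_at_right_field by auto
    define \<rho> where "\<rho> = b / 2"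
    have \<rho>: "0 < \<rho>" "\<rho> < b" using b by (auto simp: \<rho>_def)
    show ?thesis
    proof (intro exI[of _ \<rho>] conjI ballI impI)
      show "0 < \<rho>" by fact
      fix x y assume x: "x \<in> K" and y: "y \<in> K" and dxy: "dist x y < \<rho>"
      show "\<bar>F x - F y\<bar> \<le> e * dist x y powr (real m + \<gamma>)"
      proof (cases "x = y")
        case True then show ?thesis by simp
      next
        case False
        show ?thesis
        proof (rule key[OF x y False])
          fix z and ds :: "'n list"
          assume z: "norm (z - y) \<le> norm (x - y)" and l: "length ds = m"
          have zy: "dist z y \<le> dist x y" using z by (simp add: dist_norm)
          show "\<bar>iterD ds F z - iterD ds F y\<bar> \<le> e' * dist x y powr \<gamma>"
          proof (cases "z = y")
            case True then show ?thesis using e' by simp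
          next
            case zne: False
            define j where "j = (\<lambda>i. count (mset ds) i)"
            have mj: "mabs j = m" using mabs_count[of ds] l by (simp add: j_def)
            have mdj: "mderiv j F = iterD ds F" using mderiv_iterD[OF Cm, of ds] l by (simp add: j_def)
            have zin: "z \<in> nbhd K \<rho>" unfolding nbhd_def using y zy dxy
              by (auto simp: dist_commute intro!: bexI[of _ y])
            have yin: "y \<in> nbhd K \<rho>" unfolding nbhd_def using y \<rho> by (auto intro!: bexI[of _ y])
            have "ereal (\<bar>mderiv j F z - mderiv j F y\<bar> / dist z y powr \<gamma>)
                \<le> holder_grad_seminorm m \<gamma> F (nbhd K \<rho>)"
              unfolding holder_grad_seminorm_def
              by (rule Sup_upper) (use mj zin yin zne in blast)
            also have "\<dots> < ereal e'" using bb \<rho> by blast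
            finally have "\<bar>iterD ds F z - iterD ds F y\<bar> / dist z y powr \<gamma> < e'"
              by (simp add: mdj)
            moreover have "dist z y powr \<gamma> > 0" using zne by simp
            ultimately have "\<bar>iterD ds F z - iterD ds F y\<bar> < e' * dist z y powr \<gamma>"
              by (simp add: divide_less_eq)
            also have "\<dots> \<le> e' * dist x y powr \<gamma>"
              using e' zy gp by (intro mult_left_mono powr_mono2) auto
            finally show ?thesis by simp
          qed
        qed
      qed
    qed
  qed
qed



lemma finite_mabs_le: "finite {l :: ('n::finite) mindex. mabs l \<le> m}"
proof (rule finite_subset)
  show "{l :: 'n mindex. mabs l \<le> m} \<subseteq> Pi\<^sub>E UNIV (\<lambda>_. {..m})"
  proof
    fix l :: "'n mindex" assume "l \<in> {l. mabs l \<le> m}"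
    then have "l i \<le> m" for i
      using member_le_sum[of i UNIV l] by (simp add: mabs_def)
    then show "l \<in> Pi\<^sub>E UNIV (\<lambda>_. {..m})" by (simp add: PiE_UNIV_domain)
  qed
  show "finite (Pi\<^sub>E (UNIV::'n set) (\<lambda>_. {..m}))" by (intro finite_PiE) auto
qed

lemma jet_rem_calc:
  fixes j :: "('n::finite) mindex"
  shows "jet_rem m (\<lambda>j x. if j = (\<lambda>_. 0) then g x else 0) j x y
     = (if j = (\<lambda>_. 0) then g x - g y else 0)"
proof (cases "j = (\<lambda>_. 0)")
  case True
  have "(\<Sum>l\<in>{l. mabs (\<lambda>i. j i + l i) \<le> m}.
          (1 / mfact l) * (if (\<lambda>i. j i + l i) = (\<lambda>_. 0) then g y else 0) * mpow (x - y) l)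
      = (\<Sum>l\<in>{l::'n mindex. mabs l \<le> m}. if l = (\<lambda>_. 0) then g y else 0)"
  proof -
    have S: "{l. mabs (\<lambda>i. j i + l i) \<le> m} = {l::'n mindex. mabs l \<le> m}" by (simp add: True)
    show ?thesis unfolding S by (intro sum.cong) (auto simp: True mfact_def mpow_def)
  qed
  also have "\<dots> = g y" using finite_mabs_le[where 'n='n, of m] by (simp add: mabs_def)
  finally show ?thesis using True by (simp add: jet_rem_def)
next
  case False
  have "(\<lambda>i. j i + l i) \<noteq> (\<lambda>_. 0)" for l
    using False by (auto simp: fun_eq_iff)
  then show ?thesis using False by (simp add: jet_rem_def)
qed



theorem mainTheorem13:
  fixes F :: "real^'n::finite \<Rightarrow> real" and K :: "(real^'n) set"
    and m :: nat and \<gamma> :: real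
  assumes "m \<ge> 1" and "0 \<le> \<gamma>" and "\<gamma> \<le> 1"
    and "Cmg m \<gamma> F"
    and "compact K"
    and "\<And>j x. x \<in> K \<Longrightarrow> 1 \<le> mabs j \<Longrightarrow> mabs j \<le> m \<Longrightarrow> mderiv j F x = 0"
    and "\<gamma> > 0 \<Longrightarrow> ((\<lambda>\<epsilon>. holder_grad_seminorm m \<gamma> F (nbhd K \<epsilon>)) \<longlongrightarrow> 0) (at_right 0)"
  shows "\<exists>\<delta> :: real \<Rightarrow> real. (\<forall>\<epsilon>>0. 0 \<le> \<delta> \<epsilon>) \<and> (\<delta> \<longlongrightarrow> 0) (at_right 0) \<and>
           (\<forall>\<epsilon>>0. \<forall>\<eta>. compression_map \<epsilon> \<eta> \<longrightarrow>
              jet_norm m \<gamma> K (\<lambda>j x. if j = (\<lambda>_. 0) then \<eta> (F x) else 0) \<le> ereal (\<delta> \<epsilon>))"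
proof -
  have LO': "\<exists>\<rho>>0. \<forall>x\<in>K. \<forall>y\<in>K. dist x y < \<rho> \<longrightarrow> \<bar>F x - F y\<bar> \<le> e * dist x y powr (real m + \<gamma>)"
    if "e > 0" for e
    by (rule LO[OF assms(1-5)]) (use assms that in auto)
  have Cm: "Cm m F" using assms(4) by (simp add: Cmg_def)
  define p where "p = real m + \<gamma>"
  have p: "p \<ge> 1" using assms(1,2) by (simp add: p_def)
  have p0: "p > 0" using p by simp
  have "continuous_on UNIV F" using Cm_cont[OF Cm, of "[]"] by simp
  then have "compact (F ` K)" using assms(5) by (intro compact_continuous_image) (auto intro: continuous_on_subset)
  then obtain M where M: "\<And>x. x \<in> K \<Longrightarrow> \<bar>F x\<bar> \<le> M"
  proof -
    from compact_imp_bounded[OF \<open>compact (F ` K)\<close>] obtain a where "\<forall>z\<in>F ` K. norm z \<le> a"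
      unfolding bounded_iff by blast
    then show ?thesis using that by force
  qed
  obtain \<rho>1 where \<rho>1: "\<rho>1 > 0" and \<rho>1b: "\<And>x y. x \<in> K \<Longrightarrow> y \<in> K \<Longrightarrow> dist x y < \<rho>1 \<Longrightarrow> \<bar>F x - F y\<bar> \<le> 1 * dist x y powr p"
    using LO'[of 1] unfolding p_def by auto
  define S where "S r = {\<bar>F x - F y\<bar> / dist x y powr p | x y. x \<in> K \<and> y \<in> K \<and> x \<noteq> y \<and> dist x y \<le> r}" for r
  define E where "E r = Sup (insert 0 (S r))" for r
  define C0 where "C0 = max 1 (2 * M / \<rho>1 powr p)"
  have Sbd: "q \<le> C0" if qS: "q \<in> S r" for q r
  proof -
    obtain x y where xy: "x \<in> K" "y \<in> K" "x \<noteq> y" and q: "q = \<bar>F x - F y\<bar> / dist x y powr p"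
      using qS unfolding S_def by blast
    have dp: "dist x y powr p > 0" using xy by simp
    show ?thesis
    proof (cases "dist x y < \<rho>1")
      case True
      then have "\<bar>F x - F y\<bar> \<le> dist x y powr p" using \<rho>1b xy by simp
      then have "q \<le> 1" using dp by (simp add: q divide_le_eq)
      then show ?thesis by (simp add: C0_def)
    next
      case False
      have "\<bar>F x - F y\<bar> \<le> 2 * M" using M[OF xy(1)] M[OF xy(2)] by linarith
      moreover have "\<rho>1 powr p \<le> dist x y powr p" using False \<rho>1 p0 by (intro powr_mono2) auto
      ultimately have "q \<le> 2 * M / \<rho>1 powr p"
        unfolding q using \<rho>1 by (intro frac_le) auto
      then show ?thesis by (simp add: C0_def)
    qed
  qed
  have bdd: "bdd_above (insert 0 (S r))" for r
    using Sbd by (intro bdd_aboveI[of _ C0]) (auto simp: C0_def)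
  have E0: "0 \<le> E r" for r unfolding E_def by (rule cSup_upper[OF insertI1 bdd])
  have Eup: "q \<le> E r" if "q \<in> S r" for q r unfolding E_def by (rule cSup_upper[OF insertI2[OF that] bdd])
  have Esmall: "\<exists>\<rho>>0. \<forall>r. 0 < r \<longrightarrow> r < \<rho> \<longrightarrow> E r \<le> e" if e: "e > 0" for e
  proof -
    obtain \<rho> where \<rho>: "\<rho> > 0" and \<rho>b: "\<And>x y. x \<in> K \<Longrightarrow> y \<in> K \<Longrightarrow> dist x y < \<rho> \<Longrightarrow> \<bar>F x - F y\<bar> \<le> e * dist x y powr p"
      using LO'[OF e] unfolding p_def by auto
    show ?thesis
    proof (intro exI[of _ \<rho>] conjI allI impI \<rho>)
      fix r assume r: "0 < r" "r < \<rho>"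
      show "E r \<le> e" unfolding E_def
      proof (rule cSup_least)
        show "insert 0 (S r) \<noteq> {}" by simp
        fix q assume "q \<in> insert 0 (S r)"
        then show "q \<le> e"
        proof
          assume "q = 0" then show ?thesis using e by simp
        next
          assume "q \<in> S r"
          then obtain x y where xy: "x \<in> K" "y \<in> K" "x \<noteq> y" "dist x y \<le> r" and q: "q = \<bar>F x - F y\<bar> / dist x y powr p"
            unfolding S_def by blast
          have dp: "dist x y powr p > 0" using xy by simp
          have "\<bar>F x - F y\<bar> \<le> e * dist x y powr p" using \<rho>b xy r by simp
          then show ?thesis using dp by (simp add: q divide_le_eq)
        qed
      qed
    qed
  qed
  define rr where "rr \<epsilon> = \<epsilon> powr (1 / (2 * p))" for \<epsilon> :: real
  define \<delta> where "\<delta> \<epsilon> = \<epsilon> + sqrt \<epsilon> + E (rr \<epsilon>)" for \<epsilon>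
  have rrp: "rr \<epsilon> powr p = sqrt \<epsilon>" if "\<epsilon> > 0" for \<epsilon>
    using that p0 by (simp add: rr_def powr_powr powr_half_sqrt[symmetric])
  have rr0: "rr \<epsilon> > 0" if "\<epsilon> > 0" for \<epsilon> using that by (simp add: rr_def)
  show ?thesis
  proof (intro exI[of _ \<delta>] conjI allI impI)
    fix \<epsilon> :: real assume "\<epsilon> > 0"
    then show "0 \<le> \<delta> \<epsilon>" using E0 by (simp add: \<delta>_def)
  next
    have t1: "((\<lambda>\<epsilon>::real. \<epsilon>) \<longlongrightarrow> 0) (at_right 0)" by (rule tendsto_ident_at)
    have t2: "((\<lambda>\<epsilon>::real. sqrt \<epsilon>) \<longlongrightarrow> 0) (at_right 0)"
      using tendsto_real_sqrt[OF t1] by simp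
    have t3: "((\<lambda>\<epsilon>. E (rr \<epsilon>)) \<longlongrightarrow> 0) (at_right 0)"
    proof (rule tendstoI)
      fix e :: real assume e: "e > 0"
      obtain \<rho> where \<rho>: "\<rho> > 0" and \<rho>b: "\<And>r. 0 < r \<Longrightarrow> r < \<rho> \<Longrightarrow> E r \<le> e / 2"
        using Esmall[of "e/2"] e by auto
      show "\<forall>\<^sub>F \<epsilon> in at_right 0. dist (E (rr \<epsilon>)) 0 < e"
        unfolding eventually_at_right_field
      proof (intro exI[of _ "\<rho> powr (2 * p)"] conjI allI impI)
        show "0 < \<rho> powr (2 * p)" using \<rho> by simp
        fix \<epsilon> :: real assume \<epsilon>: "0 < \<epsilon>" "\<epsilon> < \<rho> powr (2 * p)"
        have "rr \<epsilon> < (\<rho> powr (2 * p)) powr (1 / (2 * p))"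
          unfolding rr_def using \<epsilon> p0 by (intro powr_less_mono2) auto
        also have "\<dots> = \<rho>" using p0 \<rho> by (simp add: powr_powr)
        finally have "E (rr \<epsilon>) \<le> e / 2" using \<rho>b rr0[OF \<epsilon>(1)] by blast
        then show "dist (E (rr \<epsilon>)) 0 < e" using E0[of "rr \<epsilon>"] e by simp
      qed
    qed
    show "(\<delta> \<longlongrightarrow> 0) (at_right 0)"
      unfolding \<delta>_def[abs_def] using tendsto_add[OF tendsto_add[OF t1 t2] t3] by simp
  next
    fix \<epsilon> :: real and \<eta> assume \<epsilon>: "\<epsilon> > 0" and cm: "compression_map \<epsilon> \<eta>"
    note cp = compression_props[OF cm]
    have dge: "\<epsilon> \<le> \<delta> \<epsilon>" "0 \<le> \<delta> \<epsilon>" using E0[of "rr \<epsilon>"] \<epsilon> by (auto simp: \<delta>_def)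
    show "jet_norm m \<gamma> K (\<lambda>j x. if j = (\<lambda>_. 0) then \<eta> (F x) else 0) \<le> ereal (\<delta> \<epsilon>)"
      unfolding jet_norm_def
    proof (rule Sup_least, elim UnE CollectE exE conjE, goal_cases)
      case (1 a j x)
      have "\<bar>\<eta> (F x)\<bar> \<le> \<epsilon>" using cp(3)[of "F x" 0] cp(1) by simp
      then show ?case unfolding 1(1) using dge by auto
    next
      case (2 a j x y)
      note a = 2(1)
      have xy: "x \<in> K" "y \<in> K" "x \<noteq> y" using 2 by auto
        show ?case
        proof (cases "j = (\<lambda>_. 0)")
          case False
          then show ?thesis unfolding a jet_rem_calc[of m "\<lambda>x. \<eta> (F x)"] using dge by simp
        next
          case True
          have mj: "mabs j = 0" using True by (simp add: mabs_def)
          have a': "a = ereal (\<bar>\<eta> (F x) - \<eta> (F y)\<bar> / dist x y powr p)"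
            unfolding a jet_rem_calc[of m "\<lambda>x. \<eta> (F x)"] using True mj by (simp add: p_def)
          have dp: "dist x y powr p > 0" using xy by simp
          have "\<bar>\<eta> (F x) - \<eta> (F y)\<bar> / dist x y powr p \<le> \<delta> \<epsilon>"
          proof (cases "dist x y \<le> rr \<epsilon>")
            case True
            have "\<bar>\<eta> (F x) - \<eta> (F y)\<bar> / dist x y powr p \<le> \<bar>F x - F y\<bar> / dist x y powr p"
              using cp(2)[of "F x" "F y"] dp by (intro divide_right_mono) auto
            also have "\<dots> \<le> E (rr \<epsilon>)" using xy True by (intro Eup) (auto simp: S_def)
            finally have "\<bar>\<eta> (F x) - \<eta> (F y)\<bar> / dist x y powr p \<le> E (rr \<epsilon>)" .
            moreover have "0 \<le> sqrt \<epsilon>" using \<epsilon> by simp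
            ultimately show ?thesis using \<epsilon> unfolding \<delta>_def by linarith
          next
            case False
            have "rr \<epsilon> powr p \<le> dist x y powr p" using False rr0[OF \<epsilon>] p0 by (intro powr_mono2) auto
            then have "\<bar>\<eta> (F x) - \<eta> (F y)\<bar> / dist x y powr p \<le> \<epsilon> / rr \<epsilon> powr p"
              using cp(3)[of "F x" "F y"] rr0[OF \<epsilon>] \<epsilon> by (intro frac_le) auto
            also have "\<dots> = sqrt \<epsilon>" using \<epsilon> rrp[OF \<epsilon>]
              by (simp add: divide_simps)
            finally show ?thesis using \<epsilon> E0[of "rr \<epsilon>"] by (simp add: \<delta>_def)
          qed
          then show ?thesis unfolding a' by simp
        qed
    qed
  qed
qed

end
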